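(* Let $V$ be a reflexive Banach space, $X$ a Banach space, $\gamma\in\mathcal{L}(V,X)$ with $c_\gamma:=\|\gamma\|_{\mathcal{L}(V,X)}$ and adjoint $\gamma^*\colon X^*\to V^*$. Let $A\colon V\to V^*$, $J\colon X\times X\to\mathbb{R}$ and $f\in V^*$ satisfy: (A1) $A$ is linear and bounded; (A2) $\langle Au,v\rangle_{V^*\times V}=\langle Av,u\rangle_{V^*\times V}$ for all $u,v\in V$; (A3) there is $m_A>0$ with $\langle Au,u\rangle_{V^*\times V}\ge m_A\|u\|_V^2$ for all $u\in V$; (J1) $J$ is locally Lipschitz continuous with respect to its second variable; (J2) there exist $c_0,c_1,c_2\ge 0$ with $\|\partial_2 J(w,v)\|_{X^*}\le c_0+c_1\|v\|_X+c_2\|w\|_X$ for all $w,v\in X$; (J3) there exist $m_\alpha,m_L\ge0$ such that $J_2^0(w_1,v_1;v_2-v_1)+J_2^0(w_2,v_2;v_1-v_2)\le m_\alpha\|v_1-v_2\|_X^2+m_L\|w_1-w_2\|_X\|v_1-v_2\|_X$ for all $w_1,w_2,v_1,v_2\in X$; (S) $m_A>(m_\alpha+m_L)c_\gamma^2$. Consider the problem: find $u\in V$ such that $Au+\gamma^*\partial_2 J(\gamma u,\gamma u)\ni f$. If this problem has a solution $u\in V$, then the solution is unique and satisfies $\|u\|_V\le c\,(1+\|f\|_{V^*})$ with a positive constant $c$.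
   Context: For a locally Lipschitz function $g\colon X\to\mathbb{R}$, the generalized (Clarke) directional derivative at $x$ in direction $v$ is $g^0(x;v)=\limsup_{y\to x,\lambda\searrow0}\frac{g(y+\lambda v)-g(y)}{\lambda}$, and the Clarke subdifferential is $\partial g(x)=\{\xi\in X^*:\langle\xi,v\rangle_{X^*\times X}\le g^0(x;v)\ \forall v\in X\}$. For $J\colon X\times X\to\mathbb{R}$, $\partial_2 J(w,v)$ and $J_2^0(w,v;z)$ denote the Clarke subdifferential and generalized directional derivative of $J(w,\cdot)$ at $v$ (in direction $z$). $\|\partial_2J(w,v)\|_{X^*}$ denotes $\sup\{\|\xi\|_{X^*}:\xi\in\partial_2J(w,v)\}$. *)

theory Defs
  imports "HOL-Analysis.Analysis"
begin

definition reflexive_space :: "'a::real_normed_vector itself \<Rightarrow> bool" where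
  "reflexive_space _ \<longleftrightarrow>
     (\<forall>\<Phi> :: ('a \<Rightarrow>\<^sub>L real) \<Rightarrow>\<^sub>L real. \<exists>v::'a. \<forall>\<xi>. blinfun_apply \<Phi> \<xi> = blinfun_apply \<xi> v)"

definition loc_lipschitz :: "('a::metric_space \<Rightarrow> real) \<Rightarrow> bool" where
  "loc_lipschitz g \<longleftrightarrow> (\<forall>x. \<exists>e>0. \<exists>L. L-lipschitz_on (ball x e) g)"

text \<open>Clarke generalized directional derivative:
  limsup of (g(y + t v) - g y)/t as y \<rightarrow> x and t \<searrow> 0
  (finite for locally Lipschitz g).\<close>
definition clarke_dd :: "('a::real_normed_vector \<Rightarrow> real) \<Rightarrow> 'a \<Rightarrow> 'a \<Rightarrow> real" where
  "clarke_dd g x v = real_of_ereal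
     (Limsup (nhds x \<times>\<^sub>F at_right (0::real))
        (\<lambda>(y, t). ereal ((g (y + t *\<^sub>R v) - g y) / t)))"

definition clarke_subdiff :: "('a::real_normed_vector \<Rightarrow> real) \<Rightarrow> 'a \<Rightarrow> ('a \<Rightarrow>\<^sub>L real) set" where
  "clarke_subdiff g x = {\<xi>. \<forall>v. blinfun_apply \<xi> v \<le> clarke_dd g x v}"

definition clarke_dd2 :: "('a::real_normed_vector \<Rightarrow> 'a \<Rightarrow> real) \<Rightarrow> 'a \<Rightarrow> 'a \<Rightarrow> 'a \<Rightarrow> real" where
  "clarke_dd2 J w v z = clarke_dd (J w) v z"

definition clarke_subdiff2 :: "('a::real_normed_vector \<Rightarrow> 'a \<Rightarrow> real) \<Rightarrow> 'a \<Rightarrow> 'a \<Rightarrow> ('a \<Rightarrow>\<^sub>L real) set" where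
  "clarke_subdiff2 J w v = clarke_subdiff (J w) v"

definition adjoint_op :: "('v::real_normed_vector \<Rightarrow>\<^sub>L 'x::real_normed_vector) \<Rightarrow> ('x \<Rightarrow>\<^sub>L real) \<Rightarrow> ('v \<Rightarrow>\<^sub>L real)" where
  "adjoint_op \<gamma> \<xi> = \<xi> o\<^sub>L \<gamma>"

definition is_solution ::
  "('v::real_normed_vector \<Rightarrow> ('v \<Rightarrow>\<^sub>L real)) \<Rightarrow> ('v \<Rightarrow>\<^sub>L 'x::real_normed_vector) \<Rightarrow> ('x \<Rightarrow> 'x \<Rightarrow> real)
     \<Rightarrow> ('v \<Rightarrow>\<^sub>L real) \<Rightarrow> 'v \<Rightarrow> bool" where
  "is_solution A \<gamma> J f u \<longleftrightarrow>
     (\<exists>\<xi>\<in>clarke_subdiff2 J (blinfun_apply \<gamma> u) (blinfun_apply \<gamma> u). A u + adjoint_op \<gamma> \<xi> = f)"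

end

theory Submission
  imports Defs
begin

lemma clarke_dd_abs:
  fixes g :: "'a::real_normed_vector \<Rightarrow> real"
  assumes L: "L-lipschitz_on (ball x e) g" and e: "e > 0"
  shows "\<bar>clarke_dd g x v\<bar> \<le> L * norm v"
proof -
  have L0: "L \<ge> 0" using L by (simp add: lipschitz_on_def)
  define d where "d = e / (2 * (norm v + 1))"
  have d: "d > 0" using e unfolding d_def by (intro divide_pos_pos) (auto intro: add_nonneg_pos)
  have ev1: "eventually (\<lambda>y. y \<in> ball x (e/2)) (nhds x)"
    using e by (intro eventually_nhds_in_open) auto
  have ev2: "eventually (\<lambda>t::real. 0 < t \<and> t < d) (at_right 0)"
    using d unfolding eventually_at_right_field by auto
  have key: "(g (y + t *\<^sub>R v) - g y) / t \<le> L * norm v \<and> - (L * norm v) \<le> (g (y + t *\<^sub>R v) - g y) / t"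
    if y: "y \<in> ball x (e/2)" and t: "0 < t" "t < d" for y t
  proof -
    have "t * norm v \<le> d * norm v" using t by (simp add: mult_right_mono)
    also have "\<dots> < e/2"
    proof -
      have "d * norm v = (e/2) * (norm v / (norm v + 1))" unfolding d_def by simp
      also have "\<dots> < (e/2) * 1" using e by (intro mult_strict_left_mono) (auto simp: divide_less_eq add_nonneg_pos)
      finally show ?thesis by simp
    qed
    finally have tv: "t * norm v < e/2" .
    have "dist x (y + t *\<^sub>R v) \<le> dist x y + dist y (y + t *\<^sub>R v)" by (rule dist_triangle)
    also have "dist y (y + t *\<^sub>R v) = t * norm v" using t by (simp add: dist_norm)
    finally have "dist x (y + t *\<^sub>R v) < e" using y tv by simp
    hence yt: "y + t *\<^sub>R v \<in> ball x e" by simp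
    have yb: "y \<in> ball x e" using y e by auto
    have "dist (g (y + t *\<^sub>R v)) (g y) \<le> L * dist (y + t *\<^sub>R v) y"
      using L yt yb by (simp add: lipschitz_on_def)
    also have "dist (y + t *\<^sub>R v) y = t * norm v" using t by (simp add: dist_norm)
    finally have h1: "dist (g (y + t *\<^sub>R v)) (g y) \<le> L * (t * norm v)" .
    have h2: "\<bar>g (y + t *\<^sub>R v) - g y\<bar> \<le> (L * norm v) * t"
      using h1 by (simp only: dist_real_def ac_simps)
    have h3: "\<bar>g (y + t *\<^sub>R v) - g y\<bar> / t \<le> L * norm v"
      using h2 t(1) by (simp only: pos_divide_le_eq)
    have "\<bar>(g (y + t *\<^sub>R v) - g y) / t\<bar> = \<bar>g (y + t *\<^sub>R v) - g y\<bar> / t"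
      using t(1) by (simp add: abs_divide)
    hence "\<bar>(g (y + t *\<^sub>R v) - g y) / t\<bar> \<le> L * norm v" using h3 by (simp only:)
    thus ?thesis unfolding abs_le_iff by linarith
  qed
  define F where "F = (\<lambda>(y, t). ereal ((g (y + t *\<^sub>R v) - g y) / t))"
  have ev: "eventually (\<lambda>p. (g (fst p + snd p *\<^sub>R v) - g (fst p)) / snd p \<le> L * norm v \<and> - (L * norm v) \<le> (g (fst p + snd p *\<^sub>R v) - g (fst p)) / snd p)
          (nhds x \<times>\<^sub>F at_right (0::real))"
    unfolding eventually_prod_filter
    apply (rule exI[of _ "\<lambda>y. y \<in> ball x (e/2)"])
    apply (rule exI[of _ "\<lambda>t::real. 0 < t \<and> t < d"])
    using ev1 ev2 key by auto
  have lim: "Limsup (nhds x \<times>\<^sub>F at_right (0::real)) F \<le> ereal (L * norm v)"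
    by (rule Limsup_bounded, rule eventually_mono[OF ev]) (auto simp: F_def case_prod_unfold)
  have lim2: "ereal (- (L * norm v)) \<le> Liminf (nhds x \<times>\<^sub>F at_right (0::real)) F"
    by (rule Liminf_bounded, rule eventually_mono[OF ev]) (auto simp: F_def case_prod_unfold)
  have nb: "nhds x \<times>\<^sub>F at_right (0::real) \<noteq> bot"
    by (simp add: prod_filter_eq_bot)
  have "Liminf (nhds x \<times>\<^sub>F at_right (0::real)) F \<le> Limsup (nhds x \<times>\<^sub>F at_right (0::real)) F"
    using nb by (rule Liminf_le_Limsup)
  hence lim3: "ereal (- (L * norm v)) \<le> Limsup (nhds x \<times>\<^sub>F at_right (0::real)) F" using lim2 by simp
  have cd: "clarke_dd g x v = real_of_ereal (Limsup (nhds x \<times>\<^sub>F at_right (0::real)) F)"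
    unfolding clarke_dd_def F_def ..
  show ?thesis
  proof (cases "Limsup (nhds x \<times>\<^sub>F at_right (0::real)) F")
    case (real r)
    hence "r \<le> L * norm v" "- (L * norm v) \<le> r" using lim lim3 by auto
    thus ?thesis using real cd by (simp add: abs_le_iff)
  next
    case PInf thus ?thesis using lim by auto
  next
    case MInf thus ?thesis using lim3 by auto
  qed
qed

theorem lemma1:
  fixes A :: "'v::banach \<Rightarrow> ('v \<Rightarrow>\<^sub>L real)"
    and \<gamma> :: "'v \<Rightarrow>\<^sub>L 'x::banach"
    and J :: "'x \<Rightarrow> 'x \<Rightarrow> real"
    and m_A m_\<alpha> m_L c0 c1 c2 :: real
  assumes V_refl: "reflexive_space TYPE('v)"
    and A1: "bounded_linear A"
    and A2: "\<And>u v. blinfun_apply (A u) v = blinfun_apply (A v) u"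
    and A3: "m_A > 0" "\<And>u. blinfun_apply (A u) u \<ge> m_A * (norm u)\<^sup>2"
    and J1: "\<And>w. loc_lipschitz (J w)"
    and J2: "c0 \<ge> 0" "c1 \<ge> 0" "c2 \<ge> 0"
      "\<And>w v \<xi>. \<xi> \<in> clarke_subdiff2 J w v \<Longrightarrow> norm \<xi> \<le> c0 + c1 * norm v + c2 * norm w"
    and J3: "m_\<alpha> \<ge> 0" "m_L \<ge> 0"
      "\<And>w1 w2 v1 v2. clarke_dd2 J w1 v1 (v2 - v1) + clarke_dd2 J w2 v2 (v1 - v2)
          \<le> m_\<alpha> * (norm (v1 - v2))\<^sup>2 + m_L * norm (w1 - w2) * norm (v1 - v2)"
    and S: "m_A > (m_\<alpha> + m_L) * (norm \<gamma>)\<^sup>2"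
  shows "(\<forall>f u1 u2. is_solution A \<gamma> J f u1 \<and> is_solution A \<gamma> J f u2 \<longrightarrow> u1 = u2)
       \<and> (\<exists>c>0. \<forall>f u. is_solution A \<gamma> J f u \<longrightarrow> norm u \<le> c * (1 + norm f))"
proof -
  let ?g = "blinfun_apply \<gamma>"
  define \<delta> where "\<delta> = m_A - (m_\<alpha> + m_L) * (norm \<gamma>)\<^sup>2"
  have \<delta>: "\<delta> > 0" using S by (simp add: \<delta>_def)
  have Alin: "A (a - b) = A a - A b" for a b using A1 by (simp add: linear_diff bounded_linear.linear)
  have gnorm: "norm (?g a) \<le> norm \<gamma> * norm a" for a by (rule norm_blinfun)
  have gsq: "(norm (?g a))\<^sup>2 \<le> (norm \<gamma>)\<^sup>2 * (norm a)\<^sup>2" for a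
  proof -
    have "(norm (?g a))\<^sup>2 \<le> (norm \<gamma> * norm a)\<^sup>2" by (rule power_mono[OF gnorm[of a]]) simp
    thus ?thesis by (simp add: power_mult_distrib)
  qed
  have sub: "blinfun_apply \<xi> z \<le> clarke_dd2 J w v z" if "\<xi> \<in> clarke_subdiff2 J w v" for \<xi> w v z
    using that by (simp add: clarke_subdiff2_def clarke_subdiff_def clarke_dd2_def)
  have eqn: "blinfun_apply (A u) x + blinfun_apply \<xi> (?g x) = blinfun_apply f x"
    if "A u + adjoint_op \<gamma> \<xi> = f" for u \<xi> f x
    using that[symmetric] by (simp add: adjoint_op_def plus_blinfun.rep_eq)
  have part1: "\<forall>f u1 u2. is_solution A \<gamma> J f u1 \<and> is_solution A \<gamma> J f u2 \<longrightarrow> u1 = u2"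
  proof (intro allI impI)
    fix f u1 u2
    assume "is_solution A \<gamma> J f u1 \<and> is_solution A \<gamma> J f u2"
    then obtain \<xi>1 \<xi>2 where x1: "\<xi>1 \<in> clarke_subdiff2 J (?g u1) (?g u1)" "A u1 + adjoint_op \<gamma> \<xi>1 = f"
      and x2: "\<xi>2 \<in> clarke_subdiff2 J (?g u2) (?g u2)" "A u2 + adjoint_op \<gamma> \<xi>2 = f"
      unfolding is_solution_def by blast
    define d where "d = u1 - u2"
    define z where "z = ?g u1 - ?g u2"
    have zd: "?g d = z" unfolding d_def z_def by (simp add: blinfun.diff_right)
    have e1: "blinfun_apply (A u1) d + blinfun_apply \<xi>1 z = blinfun_apply f d" using eqn[OF x1(2), of d] zd by simp
    have e2: "blinfun_apply (A u2) d + blinfun_apply \<xi>2 z = blinfun_apply f d" using eqn[OF x2(2), of d] zd by simp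
    have Ad: "blinfun_apply (A d) d = blinfun_apply (A u1) d - blinfun_apply (A u2) d"
      unfolding d_def Alin by (simp add: minus_blinfun.rep_eq)
    have s1: "blinfun_apply \<xi>1 (?g u2 - ?g u1) \<le> clarke_dd2 J (?g u1) (?g u1) (?g u2 - ?g u1)"
      by (rule sub[OF x1(1)])
    have s2: "blinfun_apply \<xi>2 (?g u1 - ?g u2) \<le> clarke_dd2 J (?g u2) (?g u2) (?g u1 - ?g u2)"
      by (rule sub[OF x2(1)])
    have j3: "clarke_dd2 J (?g u1) (?g u1) (?g u2 - ?g u1) + clarke_dd2 J (?g u2) (?g u2) (?g u1 - ?g u2)
        \<le> m_\<alpha> * (norm z)\<^sup>2 + m_L * norm z * norm z"
      using J3(3)[of "?g u1" "?g u1" "?g u2" "?g u2"] unfolding z_def by simp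
    have lin1: "blinfun_apply \<xi>1 (?g u2 - ?g u1) = - blinfun_apply \<xi>1 z"
      unfolding z_def by (simp add: blinfun.diff_right)
    have "blinfun_apply (A d) d = blinfun_apply \<xi>2 z - blinfun_apply \<xi>1 z" using Ad e1 e2 by simp
    also have "\<dots> \<le> (m_\<alpha> + m_L) * (norm z)\<^sup>2"
    proof -
      have s2': "blinfun_apply \<xi>2 z \<le> clarke_dd2 J (?g u2) (?g u2) z" using s2 unfolding z_def .
      have j3': "clarke_dd2 J (?g u1) (?g u1) (?g u2 - ?g u1) + clarke_dd2 J (?g u2) (?g u2) z
        \<le> m_\<alpha> * (norm z)\<^sup>2 + m_L * norm z * norm z" using j3 unfolding z_def .
      have eq: "(m_\<alpha> + m_L) * (norm z)\<^sup>2 = m_\<alpha> * (norm z)\<^sup>2 + m_L * norm z * norm z"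
        by (simp add: algebra_simps power2_eq_square)
      show ?thesis using s1 s2' j3' lin1 eq by linarith
    qed
    also have "\<dots> \<le> (m_\<alpha> + m_L) * ((norm \<gamma>)\<^sup>2 * (norm d)\<^sup>2)"
      unfolding zd[symmetric] by (rule mult_left_mono[OF gsq[of d]]) (use J3(1,2) in linarith)
    finally have "m_A * (norm d)\<^sup>2 \<le> (m_\<alpha> + m_L) * ((norm \<gamma>)\<^sup>2 * (norm d)\<^sup>2)"
      using A3(2)[of d] by linarith
    moreover have "\<delta> * (norm d)\<^sup>2 = m_A * (norm d)\<^sup>2 - (m_\<alpha> + m_L) * ((norm \<gamma>)\<^sup>2 * (norm d)\<^sup>2)"
      unfolding \<delta>_def by (simp add: algebra_simps)
    ultimately have "\<delta> * (norm d)\<^sup>2 \<le> 0" by linarith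
    hence "(norm d)\<^sup>2 \<le> 0" using \<delta> by (simp add: mult_le_0_iff)
    hence "d = 0" by simp
    thus "u1 = u2" by (simp add: d_def)
  qed
  obtain e L where eL: "e > 0" "L-lipschitz_on (ball 0 e) (J 0)"
    using J1[of 0] unfolding loc_lipschitz_def by blast
  have L0: "L \<ge> 0" using eL(2) by (simp add: lipschitz_on_def)
  define c where "c = (1 + L * norm \<gamma>) / \<delta>"
  have cpos: "c > 0" using \<delta> L0 unfolding c_def by (intro divide_pos_pos add_pos_nonneg mult_nonneg_nonneg) auto
  have part2: "\<forall>f u. is_solution A \<gamma> J f u \<longrightarrow> norm u \<le> c * (1 + norm f)"
  proof (intro allI impI)
    fix f u
    assume "is_solution A \<gamma> J f u"
    then obtain \<xi> where x: "\<xi> \<in> clarke_subdiff2 J (?g u) (?g u)" "A u + adjoint_op \<gamma> \<xi> = f"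
      unfolding is_solution_def by blast
    define z where "z = ?g u"
    have e1: "blinfun_apply (A u) u + blinfun_apply \<xi> z = blinfun_apply f u"
      using eqn[OF x(2), of u] unfolding z_def by simp
    have s1: "blinfun_apply \<xi> (0 - z) \<le> clarke_dd2 J z z (0 - z)" using sub[OF x(1)] unfolding z_def by blast
    have j3: "clarke_dd2 J z z (0 - z) + clarke_dd2 J 0 0 (z - 0) \<le> m_\<alpha> * (norm z)\<^sup>2 + m_L * norm z * norm z"
      using J3(3)[of z z 0 0] by simp
    have dd0: "\<bar>clarke_dd2 J 0 0 (z - 0)\<bar> \<le> L * norm z"
      unfolding clarke_dd2_def using clarke_dd_abs[OF eL(2) eL(1), of "z - 0"] by simp
    have lin: "blinfun_apply \<xi> (0 - z) = - blinfun_apply \<xi> z" by (simp add: blinfun.minus_right)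
    have "- blinfun_apply \<xi> z \<le> (m_\<alpha> + m_L) * (norm z)\<^sup>2 + L * norm z"
    proof -
      have dd0': "- (L * norm z) \<le> clarke_dd2 J 0 0 (z - 0)" using dd0 by (simp add: abs_le_iff)
      have eq: "(m_\<alpha> + m_L) * (norm z)\<^sup>2 = m_\<alpha> * (norm z)\<^sup>2 + m_L * norm z * norm z"
        by (simp add: algebra_simps power2_eq_square)
      have s1': "blinfun_apply \<xi> (0 - z) \<le> clarke_dd2 J z z (0 - z)" by (rule s1)
      show ?thesis using s1' j3 dd0' lin eq by linarith
    qed
    also have "\<dots> \<le> (m_\<alpha> + m_L) * ((norm \<gamma>)\<^sup>2 * (norm u)\<^sup>2) + L * (norm \<gamma> * norm u)"
    proof -
      have "(m_\<alpha> + m_L) * (norm z)\<^sup>2 \<le> (m_\<alpha> + m_L) * ((norm \<gamma>)\<^sup>2 * (norm u)\<^sup>2)"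
        unfolding z_def by (rule mult_left_mono[OF gsq[of u]]) (use J3(1,2) in linarith)
      moreover have "L * norm z \<le> L * (norm \<gamma> * norm u)"
        using gnorm[of u] L0 unfolding z_def by (rule mult_left_mono)
      ultimately show ?thesis by linarith
    qed
    finally have xi: "- blinfun_apply \<xi> z \<le> (m_\<alpha> + m_L) * ((norm \<gamma>)\<^sup>2 * (norm u)\<^sup>2) + L * (norm \<gamma> * norm u)" .
    have fu: "blinfun_apply f u \<le> norm f * norm u"
      using norm_blinfun[of f u] by simp
    have mu: "m_A * (norm u)\<^sup>2 \<le> norm f * norm u + (m_\<alpha> + m_L) * ((norm \<gamma>)\<^sup>2 * (norm u)\<^sup>2) + L * (norm \<gamma> * norm u)"
      using A3(2)[of u] e1 xi fu by linarith
    have main: "\<delta> * norm u * norm u \<le> (norm f + L * norm \<gamma>) * norm u"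
    proof -
      have eq1: "\<delta> * norm u * norm u = m_A * (norm u)\<^sup>2 - (m_\<alpha> + m_L) * ((norm \<gamma>)\<^sup>2 * (norm u)\<^sup>2)"
        unfolding \<delta>_def by (simp add: algebra_simps power2_eq_square)
      have eq2: "(norm f + L * norm \<gamma>) * norm u = norm f * norm u + L * (norm \<gamma> * norm u)"
        by (simp add: algebra_simps)
      show ?thesis using eq1 eq2 mu by linarith
    qed
    show "norm u \<le> c * (1 + norm f)"
    proof (cases "norm u = 0")
      case True thus ?thesis using cpos by simp
    next
      case False
      hence "norm u > 0" by simp
      hence "\<delta> * norm u \<le> norm f + L * norm \<gamma>" by (rule mult_right_le_imp_le[OF main])
      also have "\<dots> \<le> (1 + L * norm \<gamma>) * (1 + norm f)"
      proof -
        have "0 \<le> L * norm \<gamma> * norm f" using L0 by simp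
        moreover have "(1 + L * norm \<gamma>) * (1 + norm f) = 1 + norm f + L * norm \<gamma> + L * norm \<gamma> * norm f"
          by (simp add: algebra_simps)
        ultimately show ?thesis by linarith
      qed
      finally have "\<delta> * norm u \<le> (1 + L * norm \<gamma>) * (1 + norm f)" .
      hence "norm u \<le> (1 + L * norm \<gamma>) * (1 + norm f) / \<delta>" using \<delta> by (simp only: pos_le_divide_eq ac_simps)
      thus ?thesis unfolding c_def by simp
    qed
  qed
  show ?thesis using part1 part2 cpos by blast
qed

end
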